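(* Let $\mathbf{v}_1,\ldots,\mathbf{v}_k$ be orthogonal unit vectors in $\mathbb{R}^k$, let $F:\mathbb{R}^{kn}\to\mathbb{R}$ be \[ F(\mathbf{w}_1,\ldots,\mathbf{w}_n)=\mathbb{E}_{\mathbf{x}\sim\mathcal{N}(\mathbf{0},I_k)}\left[\frac{1}{2}\left(\sum_{i=1}^{n}[\mathbf{w}_i^\top\mathbf{x}]_+-\sum_{i=1}^{k}[\mathbf{v}_i^\top\mathbf{x}]_+\right)^2\right], \] and let $\mathbf{w}\in\mathbb{R}^{kn}$ and $\alpha>0$ be such that $F$ is thrice differentiable on an open set containing the closed ball of radius $\alpha$ centered at $\mathbf{w}$. For a unit vector $\mathbf{u}\in\mathbb{R}^{kn}$ and $t\in(0,\alpha]$, let $R_{\mathbf{w},\mathbf{u},t}$ be the Lagrange remainder, i.e. the number with \[ F(\mathbf{w}+t\mathbf{u})=F(\mathbf{w})+t\nabla F(\mathbf{w})^\top\mathbf{u}+\tfrac{1}{2}t^2\mathbf{u}^\top\nabla^2F(\mathbf{w})\mathbf{u}+\tfrac{1}{6}t^3R_{\mathbf{w},\mathbf{u},t} \] (by Taylor's theorem $R_{\mathbf{w},\mathbf{u},t}=\sum_{i_1,i_2,i_3}\frac{\partial^3 F}{\partial w_{i_1}\partial w_{i_2}\partial w_{i_3}}(\mathbf{w}+\xi\mathbf{u})u_{i_1}u_{i_2}u_{i_3}$ for some $\xi\in(0,t)$). Assume that for some $\epsilon,B>0$ we have $\|\nabla F(\mathbf{w})\|\le\epsilon$ and $\sup_{t\in(0,\alpha],\,\|\mathbf{u}\|=1}|R_{\mathbf{w},\mathbf{u},t}|\le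 B$. Let $\lambda_{\min}>0$ be the smallest eigenvalue of $\nabla^2F(\mathbf{w})$ (assumed positive), and let \[ r=\frac{3\lambda_{\min}-\sqrt{9\lambda_{\min}^2-25B\epsilon}}{2B}. \] If $9\lambda_{\min}^2-25B\epsilon\ge 0$ and $r<\alpha$, then $F$ has a local minimum at distance at most $r$ from $\mathbf{w}$.
   Context: $[z]_+=\max\{0,z\}$. A local minimum of $F$ is a point $\mathbf{w}^*$ with $F(\mathbf{w}^* )\le F(\mathbf{w}')$ for all $\mathbf{w}'$ in some open neighborhood of $\mathbf{w}^*$. Norms are Euclidean. *)

theory Defs
  imports "HOL-Probability.Probability"
begin

definition relu :: "real \<Rightarrow> real" where
  "relu z = max 0 z"

definition gauss_density :: "real^'k \<Rightarrow> real" where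
  "gauss_density x = (\<Prod>i\<in>UNIV. std_normal_density (x $ i))"

definition gauss_expect :: "(real^'k \<Rightarrow> real) \<Rightarrow> real" where
  "gauss_expect f = (\<integral>x. f x * gauss_density x \<partial>lborel)"

definition relu_loss :: "('k \<Rightarrow> real^'k) \<Rightarrow> real^'k^'n \<Rightarrow> real" where
  "relu_loss v w = gauss_expect (\<lambda>x.
      (1/2) * ((\<Sum>i\<in>UNIV. relu ((w $ i) \<bullet> x)) - (\<Sum>i\<in>UNIV. relu (v i \<bullet> x)))\<^sup>2)"

definition local_min_at :: "('a::topological_space \<Rightarrow> real) \<Rightarrow> 'a \<Rightarrow> bool" where
  "local_min_at F w \<longleftrightarrow> (\<exists>S. open S \<and> w \<in> S \<and> (\<forall>w'\<in>S. F w \<le> F w'))"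

definition lagrange_rem ::
  "('a::real_inner \<Rightarrow> real) \<Rightarrow> 'a \<Rightarrow> 'a \<Rightarrow> ('a \<Rightarrow> 'a) \<Rightarrow> 'a \<Rightarrow> real \<Rightarrow> real" where
  "lagrange_rem F w g H u t =
     6 / t^3 * (F (w + t *\<^sub>R u) - F w - t * (g \<bullet> u) - t\<^sup>2 / 2 * (u \<bullet> H u))"

definition is_eigenvalue :: "('a::real_vector \<Rightarrow> 'a) \<Rightarrow> real \<Rightarrow> bool" where
  "is_eigenvalue A c \<longleftrightarrow> (\<exists>u. u \<noteq> 0 \<and> A u = c *\<^sub>R u)"

end

theory Submission
  imports Defs
begin

lemma line_deriv:
  fixes F :: "'a::real_inner \<Rightarrow> real"
  assumes "(F has_derivative (\<lambda>h. g \<bullet> h)) (at (p + t *\<^sub>R d))"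
  shows "((\<lambda>t. F (p + t *\<^sub>R d)) has_real_derivative (g \<bullet> d)) (at t)"
proof -
  have l: "((\<lambda>t. p + t *\<^sub>R d) has_derivative (\<lambda>t. t *\<^sub>R d)) (at t)"
    by (auto intro!: derivative_eq_intros)
  have "((\<lambda>t. F (p + t *\<^sub>R d)) has_derivative (\<lambda>h. g \<bullet> (h *\<^sub>R d))) (at t)"
    using has_derivative_compose[OF l assms] .
  then show ?thesis
    by (rule has_derivative_imp_has_field_derivative) simp
qed

lemma line_deriv2:
  fixes G :: "'a::real_inner \<Rightarrow> 'a"
  assumes "(G has_derivative blinfun_apply L) (at (p + t *\<^sub>R d))"
  shows "((\<lambda>t. G (p + t *\<^sub>R d) \<bullet> b) has_real_derivative (blinfun_apply L d \<bullet> b)) (at t)"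
proof -
  have l: "((\<lambda>t. p + t *\<^sub>R d) has_derivative (\<lambda>t. t *\<^sub>R d)) (at t)"
    by (auto intro!: derivative_eq_intros)
  have "((\<lambda>t. G (p + t *\<^sub>R d)) has_derivative (\<lambda>h. blinfun_apply L (h *\<^sub>R d))) (at t)"
    using has_derivative_compose[OF l assms] .
  from bounded_linear.has_derivative[OF bounded_linear_inner_left this]
  have "((\<lambda>t. G (p + t *\<^sub>R d) \<bullet> b) has_derivative (\<lambda>h. blinfun_apply L (h *\<^sub>R d) \<bullet> b)) (at t)" .
  then show ?thesis
    by (rule has_derivative_imp_has_field_derivative) (simp add: blinfun.scaleR_right)
qed

lemma phi_mvt:
  fixes F :: "'a::real_inner \<Rightarrow> real" and G :: "'a \<Rightarrow> 'a" and H :: "'a \<Rightarrow> ('a \<Rightarrow>\<^sub>L 'a)"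
  assumes grad: "\<And>x. x \<in> U \<Longrightarrow> (F has_derivative (\<lambda>h. G x \<bullet> h)) (at x)"
    and hess: "\<And>x. x \<in> U \<Longrightarrow> (G has_derivative blinfun_apply (H x)) (at x)"
    and sub: "cball w \<alpha> \<subseteq> U" and s: "s > 0" and sa: "s * (norm a + norm b) \<le> \<alpha>"
  shows "\<exists>p. dist p w \<le> s * (norm a + norm b) \<and>
    F (w + s *\<^sub>R a + s *\<^sub>R b) - F (w + s *\<^sub>R a) - F (w + s *\<^sub>R b) + F w
      = s\<^sup>2 * (blinfun_apply (H p) a \<bullet> b)"
proof -
  have dst: "dist (w + \<sigma> *\<^sub>R a + \<tau> *\<^sub>R b) w \<le> s * (norm a + norm b)"
    if "0 \<le> \<sigma>" "\<sigma> \<le> s" "0 \<le> \<tau>" "\<tau> \<le> s" for \<sigma> \<tau>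
  proof -
    have "dist (w + \<sigma> *\<^sub>R a + \<tau> *\<^sub>R b) w = norm (\<sigma> *\<^sub>R a + \<tau> *\<^sub>R b)"
      by (simp add: dist_norm)
    also have "\<dots> \<le> \<sigma> * norm a + \<tau> * norm b"
      using norm_triangle_ineq[of "\<sigma> *\<^sub>R a" "\<tau> *\<^sub>R b"] that by simp
    also have "\<dots> \<le> s * norm a + s * norm b"
      by (intro add_mono mult_right_mono) (use that in auto)
    finally show ?thesis by (simp add: algebra_simps)
  qed
  have inU: "w + \<sigma> *\<^sub>R a + \<tau> *\<^sub>R b \<in> U"
    if "0 \<le> \<sigma>" "\<sigma> \<le> s" "0 \<le> \<tau>" "\<tau> \<le> s" for \<sigma> \<tau>
    using dst[OF that] sa sub by (auto simp: dist_commute)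
  define g where "g t = F (w + s *\<^sub>R a + t *\<^sub>R b) - F (w + t *\<^sub>R b)" for t
  have dg: "(g has_real_derivative (G (w + s *\<^sub>R a + t *\<^sub>R b) \<bullet> b - G (w + t *\<^sub>R b) \<bullet> b)) (at t)"
    if "0 \<le> t" "t \<le> s" for t
  proof -
    have 1: "((\<lambda>t. F (w + s *\<^sub>R a + t *\<^sub>R b)) has_real_derivative (G (w + s *\<^sub>R a + t *\<^sub>R b) \<bullet> b)) (at t)"
      by (rule line_deriv, rule grad, rule inU) (use that s in auto)
    have 2: "((\<lambda>t. F (w + t *\<^sub>R b)) has_real_derivative (G (w + t *\<^sub>R b) \<bullet> b)) (at t)"
      by (rule line_deriv, rule grad) (use inU[of 0 t] that s in auto)
    show ?thesis unfolding g_def by (rule DERIV_diff[OF 1 2])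
  qed
  obtain \<tau> where \<tau>: "0 < \<tau>" "\<tau> < s" and
    gm: "g s - g 0 = (s - 0) * (G (w + s *\<^sub>R a + \<tau> *\<^sub>R b) \<bullet> b - G (w + \<tau> *\<^sub>R b) \<bullet> b)"
    using MVT2[OF s, of g "\<lambda>t. G (w + s *\<^sub>R a + t *\<^sub>R b) \<bullet> b - G (w + t *\<^sub>R b) \<bullet> b"] dg by auto
  define h where "h \<sigma> = G ((w + \<tau> *\<^sub>R b) + \<sigma> *\<^sub>R a) \<bullet> b" for \<sigma>
  have dh: "(h has_real_derivative (blinfun_apply (H ((w + \<tau> *\<^sub>R b) + \<sigma> *\<^sub>R a)) a \<bullet> b)) (at \<sigma>)"
    if "0 \<le> \<sigma>" "\<sigma> \<le> s" for \<sigma>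
    unfolding h_def
    by (rule line_deriv2, rule hess) (use inU[of \<sigma> \<tau>] that \<tau> in \<open>auto simp: algebra_simps\<close>)
  obtain \<sigma> where \<sigma>: "0 < \<sigma>" "\<sigma> < s" and
    hm: "h s - h 0 = (s - 0) * (blinfun_apply (H ((w + \<tau> *\<^sub>R b) + \<sigma> *\<^sub>R a)) a \<bullet> b)"
    using MVT2[OF s, of h "\<lambda>\<sigma>. blinfun_apply (H ((w + \<tau> *\<^sub>R b) + \<sigma> *\<^sub>R a)) a \<bullet> b"] dh by auto
  have e: "G (w + s *\<^sub>R a + \<tau> *\<^sub>R b) \<bullet> b - G (w + \<tau> *\<^sub>R b) \<bullet> b = h s - h 0"
    unfolding h_def by (simp add: algebra_simps)
  show ?thesis
  proof (intro exI conjI)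
    show "dist ((w + \<tau> *\<^sub>R b) + \<sigma> *\<^sub>R a) w \<le> s * (norm a + norm b)"
      using dst[of \<sigma> \<tau>] \<sigma> \<tau> by (simp add: algebra_simps)
    show "F (w + s *\<^sub>R a + s *\<^sub>R b) - F (w + s *\<^sub>R a) - F (w + s *\<^sub>R b) + F w
      = s\<^sup>2 * (blinfun_apply (H ((w + \<tau> *\<^sub>R b) + \<sigma> *\<^sub>R a)) a \<bullet> b)"
      using gm hm e unfolding g_def by (simp add: power2_eq_square)
  qed
qed

lemma inner_bound:
  fixes L M :: "'a::real_inner \<Rightarrow>\<^sub>L 'a"
  shows "\<bar>blinfun_apply L a \<bullet> b - blinfun_apply M a \<bullet> b\<bar> \<le> dist L M * norm a * norm b"
proof -
  have "\<bar>blinfun_apply L a \<bullet> b - blinfun_apply M a \<bullet> b\<bar> = \<bar>blinfun_apply (L - M) a \<bullet> b\<bar>"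
    by (simp add: blinfun.diff_left inner_diff_left)
  also have "\<dots> \<le> norm (blinfun_apply (L - M) a) * norm b" by (rule Cauchy_Schwarz_ineq2)
  also have "\<dots> \<le> norm (L - M) * norm a * norm b"
    by (intro mult_right_mono norm_blinfun) auto
  finally show ?thesis by (simp add: dist_norm)
qed

lemma hess_sym:
  fixes F :: "'a::real_inner \<Rightarrow> real" and G :: "'a \<Rightarrow> 'a" and H :: "'a \<Rightarrow> ('a \<Rightarrow>\<^sub>L 'a)"
  assumes grad: "\<And>x. x \<in> U \<Longrightarrow> (F has_derivative (\<lambda>h. G x \<bullet> h)) (at x)"
    and hess: "\<And>x. x \<in> U \<Longrightarrow> (G has_derivative blinfun_apply (H x)) (at x)"
    and sub: "cball w \<alpha> \<subseteq> U" and \<alpha>: "\<alpha> > 0" and cont: "isCont H w"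
  shows "blinfun_apply (H w) a \<bullet> b = blinfun_apply (H w) b \<bullet> a"
proof -
  define D where "D = \<bar>blinfun_apply (H w) a \<bullet> b - blinfun_apply (H w) b \<bullet> a\<bar>"
  define K where "K = norm a * norm b + 1"
  have K: "K > 0" unfolding K_def by (simp add: add_nonneg_pos)
  have main: "D \<le> 2 * e * K" if e: "e > 0" for e
  proof -
    obtain \<delta> where \<delta>: "\<delta> > 0" and hd: "\<And>x. dist x w < \<delta> \<Longrightarrow> dist (H x) (H w) < e"
      using cont e unfolding continuous_at_eps_delta by blast
    define N where "N = norm a + norm b"
    have N: "N \<ge> 0" unfolding N_def by simp
    define s where "s = min \<alpha> \<delta> / (2 * (N + 1))"
    have s: "s > 0" unfolding s_def using \<alpha> \<delta> N by auto
    have sN: "s * N \<le> min \<alpha> \<delta> / 2"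
    proof -
      have "s * N = min \<alpha> \<delta> / 2 * (N / (N + 1))" unfolding s_def by (simp add: field_simps)
      also have "\<dots> \<le> min \<alpha> \<delta> / 2 * 1"
        using N \<alpha> \<delta> by (intro mult_left_mono) auto
      finally show ?thesis by simp
    qed
    have s1: "s * (norm a + norm b) \<le> \<alpha>" and s2: "s * (norm b + norm a) \<le> \<alpha>"
      using sN \<alpha> \<delta> unfolding N_def by (auto simp: add.commute)
    have s3: "s * (norm a + norm b) < \<delta>" "s * (norm b + norm a) < \<delta>"
      using sN \<alpha> \<delta> unfolding N_def by (auto simp: add.commute)
    obtain p where p: "dist p w \<le> s * (norm a + norm b)" and
      pe: "F (w + s *\<^sub>R a + s *\<^sub>R b) - F (w + s *\<^sub>R a) - F (w + s *\<^sub>R b) + F w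
      = s\<^sup>2 * (blinfun_apply (H p) a \<bullet> b)"
      using phi_mvt[OF grad hess sub s s1] by blast
    obtain q where q: "dist q w \<le> s * (norm b + norm a)" and
      qe: "F (w + s *\<^sub>R b + s *\<^sub>R a) - F (w + s *\<^sub>R b) - F (w + s *\<^sub>R a) + F w
      = s\<^sup>2 * (blinfun_apply (H q) b \<bullet> a)"
      using phi_mvt[OF grad hess sub s s2] by blast
    have "s\<^sup>2 * (blinfun_apply (H p) a \<bullet> b) = s\<^sup>2 * (blinfun_apply (H q) b \<bullet> a)"
      using pe qe by (simp add: algebra_simps)
    then have pq: "blinfun_apply (H p) a \<bullet> b = blinfun_apply (H q) b \<bullet> a" using s by simp
    have dp: "dist (H p) (H w) < e" using hd p s3 by auto
    have dq: "dist (H q) (H w) < e" using hd q s3 by auto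
    have b1: "\<bar>blinfun_apply (H p) a \<bullet> b - blinfun_apply (H w) a \<bullet> b\<bar> \<le> e * K"
    proof -
      have "\<bar>blinfun_apply (H p) a \<bullet> b - blinfun_apply (H w) a \<bullet> b\<bar> \<le> dist (H p) (H w) * norm a * norm b"
        by (rule inner_bound)
      also have "\<dots> \<le> e * (norm a * norm b)"
        using mult_left_mono[OF less_imp_le[OF dp], of "norm a * norm b"] by (simp add: ac_simps)
      also have "\<dots> \<le> e * K" using e unfolding K_def by simp
      finally show ?thesis .
    qed
    have b2: "\<bar>blinfun_apply (H q) b \<bullet> a - blinfun_apply (H w) b \<bullet> a\<bar> \<le> e * K"
    proof -
      have "\<bar>blinfun_apply (H q) b \<bullet> a - blinfun_apply (H w) b \<bullet> a\<bar> \<le> dist (H q) (H w) * norm b * norm a"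
        by (rule inner_bound)
      also have "\<dots> \<le> e * (norm a * norm b)"
        using mult_left_mono[OF less_imp_le[OF dq], of "norm a * norm b"] by (simp add: ac_simps)
      also have "\<dots> \<le> e * K" using e unfolding K_def by simp
      finally show ?thesis .
    qed
    show ?thesis unfolding D_def using b1 b2 pq by linarith
  qed
  have "D \<le> D / 2"
  proof (cases "D > 0")
    case True
    show ?thesis using main[of "D / (4 * K)"] True K by (simp add: field_simps)
  next
    case False then show ?thesis unfolding D_def by simp
  qed
  then have "D = 0" unfolding D_def by simp
  then show ?thesis unfolding D_def by simp
qed

lemma quad_scale:
  fixes L :: "'a::real_inner \<Rightarrow>\<^sub>L 'a"
  shows "(c *\<^sub>R x) \<bullet> blinfun_apply L (c *\<^sub>R x) = c\<^sup>2 * (x \<bullet> blinfun_apply L x)"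
  by (simp add: blinfun.scaleR_right power2_eq_square)

lemma quad_expand:
  fixes L :: "'a::real_inner \<Rightarrow>\<^sub>L 'a"
  assumes sym: "\<And>a b. blinfun_apply L a \<bullet> b = blinfun_apply L b \<bullet> a"
  shows "(u + s *\<^sub>R h) \<bullet> blinfun_apply L (u + s *\<^sub>R h) - m * (norm (u + s *\<^sub>R h))\<^sup>2
    = (u \<bullet> blinfun_apply L u - m * (norm u)\<^sup>2) + 2 * s * (h \<bullet> (blinfun_apply L u - m *\<^sub>R u))
      + s\<^sup>2 * (h \<bullet> blinfun_apply L h - m * (norm h)\<^sup>2)"
proof -
  have e: "u \<bullet> blinfun_apply L h = h \<bullet> blinfun_apply L u"
    using sym[of h u] by (simp add: inner_commute)
  have n: "(norm (u + s *\<^sub>R h))\<^sup>2 = (norm u)\<^sup>2 + 2 * s * (h \<bullet> u) + s\<^sup>2 * (norm h)\<^sup>2"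
    unfolding power2_norm_eq_inner
    by (simp add: inner_add_left inner_add_right inner_commute[of u h] algebra_simps power2_eq_square)
  show ?thesis
    unfolding n
    by (simp add: power2_norm_eq_inner blinfun.add_right blinfun.scaleR_right inner_add_left
        inner_add_right inner_diff_right e algebra_simps power2_eq_square inner_commute[of u h])
qed

lemma quad_lb:
  fixes L :: "'a::euclidean_space \<Rightarrow>\<^sub>L 'a"
  assumes sym: "\<And>a b. blinfun_apply L a \<bullet> b = blinfun_apply L b \<bullet> a"
    and least: "\<And>\<mu>. (\<exists>u. u \<noteq> 0 \<and> blinfun_apply L u = \<mu> *\<^sub>R u) \<Longrightarrow> lmin \<le> \<mu>"
  shows "lmin * (norm x)\<^sup>2 \<le> x \<bullet> blinfun_apply L x"
proof -
  let ?Q = "\<lambda>x. x \<bullet> blinfun_apply L x"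
  have ne: "sphere (0::'a) 1 \<noteq> {}"
  proof -
    obtain i where "i \<in> (Basis :: 'a set)" using nonempty_Basis by blast
    then show ?thesis by (auto simp: sphere_def intro!: exI[of _ i])
  qed
  have cont: "continuous_on (sphere 0 1) ?Q"
    by (intro continuous_intros)
  obtain u0 where u0: "u0 \<in> sphere 0 1" and mn: "\<And>y. y \<in> sphere 0 1 \<Longrightarrow> ?Q u0 \<le> ?Q y"
    using continuous_attains_inf[OF compact_sphere ne cont] by blast
  define m where "m = ?Q u0"
  have nu0: "norm u0 = 1" using u0 by simp
  have ge: "m * (norm y)\<^sup>2 \<le> ?Q y" for y
  proof (cases "y = 0")
    case True then show ?thesis by simp
  next
    case False
    let ?y = "(1 / norm y) *\<^sub>R y"
    have "?y \<in> sphere 0 1" using False by simp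
    then have "m \<le> ?Q ?y" using mn unfolding m_def by blast
    also have "?Q ?y = ?Q y / (norm y)\<^sup>2"
      by (simp only: quad_scale) (simp add: power_divide)
    finally show ?thesis using False by (simp add: field_simps)
  qed
  have c0: "h \<bullet> (blinfun_apply L u0 - m *\<^sub>R u0) = 0" for h
  proof -
    define c where "c = h \<bullet> (blinfun_apply L u0 - m *\<^sub>R u0)"
    define d where "d = ?Q h - m * (norm h)\<^sup>2"
    have f: "0 \<le> 2 * s * c + s\<^sup>2 * d" for s
    proof -
      have "0 \<le> ?Q (u0 + s *\<^sub>R h) - m * (norm (u0 + s *\<^sub>R h))\<^sup>2" using ge[of "u0 + s *\<^sub>R h"] by simp
      also have "\<dots> = 2 * s * c + s\<^sup>2 * d"
        unfolding quad_expand[OF sym] c_def d_def m_def using nu0 by simp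
      finally show ?thesis .
    qed
    define s where "s = - c / (\<bar>d\<bar> + 1)"
    have pos: "\<bar>d\<bar> + 1 > 0" by simp
    have "0 \<le> (2 * s * c + s\<^sup>2 * d) * (\<bar>d\<bar> + 1)\<^sup>2" using f[of s] by simp
    also have "\<dots> = 2 * (s * (\<bar>d\<bar> + 1)) * c * (\<bar>d\<bar> + 1) + (s * (\<bar>d\<bar> + 1))\<^sup>2 * d"
      by (simp add: algebra_simps power2_eq_square)
    also have "s * (\<bar>d\<bar> + 1) = - c" unfolding s_def using pos by simp
    also have "2 * (- c) * c * (\<bar>d\<bar> + 1) + (- c)\<^sup>2 * d = c\<^sup>2 * (d - 2 * (\<bar>d\<bar> + 1))"
      by (simp add: algebra_simps power2_eq_square)
    finally have "0 \<le> c\<^sup>2 * (d - 2 * (\<bar>d\<bar> + 1))" .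
    moreover have "d - 2 * (\<bar>d\<bar> + 1) < 0" by (cases "d \<ge> 0") auto
    ultimately have "c\<^sup>2 \<le> 0" using mult_pos_neg[of "c\<^sup>2" "d - 2 * (\<bar>d\<bar> + 1)"] by linarith
    then show ?thesis unfolding c_def by simp
  qed
  have "blinfun_apply L u0 - m *\<^sub>R u0 = 0"
    using c0[of "blinfun_apply L u0 - m *\<^sub>R u0"] by simp
  then have "lmin \<le> m" using least[of m] nu0 by (metis eq_iff_diff_eq_0 norm_zero zero_neq_one)
  then have "lmin * (norm x)\<^sup>2 \<le> m * (norm x)\<^sup>2" by (simp add: mult_right_mono)
  then show ?thesis using ge[of x] by simp
qed

theorem lemma1:
  fixes v :: "'k::finite \<Rightarrow> real^'k"
    and F :: "real^'k^'n::finite \<Rightarrow> real"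
    and w :: "real^'k^'n"
    and U :: "(real^'k^'n) set"
    and G :: "real^'k^'n \<Rightarrow> real^'k^'n"
    and H :: "real^'k^'n \<Rightarrow> ((real^'k^'n) \<Rightarrow>\<^sub>L (real^'k^'n))"
    and H3 :: "real^'k^'n \<Rightarrow> ((real^'k^'n) \<Rightarrow> ((real^'k^'n) \<Rightarrow>\<^sub>L (real^'k^'n)))"
    and \<alpha> \<epsilon> B lmin r :: real
  assumes v_unit: "\<And>i. norm (v i) = 1"
    and v_orth: "\<And>i j. i \<noteq> j \<Longrightarrow> v i \<bullet> v j = 0"
    and F_def: "F = relu_loss v"
    and \<alpha>_pos: "\<alpha> > 0"
    and U_open: "open U" and U_ball: "cball w \<alpha> \<subseteq> U"
    and grad: "\<And>x. x \<in> U \<Longrightarrow> (F has_derivative (\<lambda>h. G x \<bullet> h)) (at x)"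
    and hess: "\<And>x. x \<in> U \<Longrightarrow> (G has_derivative blinfun_apply (H x)) (at x)"
    and third: "\<And>x. x \<in> U \<Longrightarrow> (H has_derivative H3 x) (at x)"
    and \<epsilon>_pos: "\<epsilon> > 0" and B_pos: "B > 0"
    and grad_small: "norm (G w) \<le> \<epsilon>"
    and rem_bound: "\<And>u t. norm u = 1 \<Longrightarrow> t \<in> {0<..\<alpha>} \<Longrightarrow>
                       \<bar>lagrange_rem F w (G w) (blinfun_apply (H w)) u t\<bar> \<le> B"
    and lmin_eig: "is_eigenvalue (blinfun_apply (H w)) lmin"
    and lmin_least: "\<And>\<mu>. is_eigenvalue (blinfun_apply (H w)) \<mu> \<Longrightarrow> lmin \<le> \<mu>"
    and lmin_pos: "lmin > 0"
    and r_def: "r = (3 * lmin - sqrt (9 * lmin\<^sup>2 - 25 * B * \<epsilon>)) / (2 * B)"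
    and disc: "9 * lmin\<^sup>2 - 25 * B * \<epsilon> \<ge> 0"
    and r_lt: "r < \<alpha>"
  shows "\<exists>w'. dist w' w \<le> r \<and> local_min_at F w'"
proof -
  let ?L = "blinfun_apply (H w)"
  have wU: "w \<in> U" using U_ball \<alpha>_pos by auto
  have cont: "isCont H w" using has_derivative_continuous[OF third[OF wU]] .
  have sym: "\<And>a b. ?L a \<bullet> b = ?L b \<bullet> a"
    by (rule hess_sym[OF grad hess U_ball \<alpha>_pos cont])
  have quad: "\<And>x. lmin * (norm x)\<^sup>2 \<le> x \<bullet> ?L x"
    by (rule quad_lb[OF sym]) (use lmin_least in \<open>auto simp: is_eigenvalue_def\<close>)
  define S where "S = sqrt (9 * lmin\<^sup>2 - 25 * B * \<epsilon>)"
  have S0: "S \<ge> 0" unfolding S_def using disc by simp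
  have S2: "S\<^sup>2 = 9 * lmin\<^sup>2 - 25 * B * \<epsilon>" unfolding S_def using disc by simp
  have "S\<^sup>2 < (3 * lmin)\<^sup>2" using S2 B_pos \<epsilon>_pos by (simp add: power2_eq_square)
  then have S3: "S < 3 * lmin" using lmin_pos by (smt (verit) power_mono S0)
  have r2: "2 * B * r = 3 * lmin - S" unfolding r_def S_def[symmetric] using B_pos by simp
  have r_pos: "r > 0" using r2 S3 B_pos by (smt (verit) mult_pos_pos zero_less_mult_iff)
  have "4 * B * (B * r\<^sup>2 - 3 * lmin * r + 6 * \<epsilon>) = (2 * B * r)\<^sup>2 - 6 * lmin * (2 * B * r) + 24 * B * \<epsilon>"
    by (simp add: algebra_simps power2_eq_square)
  also have "\<dots> = - B * \<epsilon>" unfolding r2 using S2 by (simp add: algebra_simps power2_eq_square)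
  finally have "4 * B * (B * r\<^sup>2 - 3 * lmin * r + 6 * \<epsilon>) < 0" using B_pos \<epsilon>_pos by simp
  then have key: "B * r\<^sup>2 - 3 * lmin * r + 6 * \<epsilon> < 0" using B_pos by (simp add: mult_less_0_iff)
  have sphere_gt: "F (w + r *\<^sub>R u) > F w" if u: "norm u = 1" for u
  proof -
    define X where "X = F (w + r *\<^sub>R u) - F w - r * (G w \<bullet> u) - r\<^sup>2 / 2 * (u \<bullet> ?L u)"
    have "\<bar>6 / r ^ 3 * X\<bar> \<le> B"
      using rem_bound[OF u, of r] r_pos r_lt unfolding lagrange_rem_def X_def by simp
    then have "- B \<le> 6 / r ^ 3 * X" using abs_ge_minus_self[of "6 / r ^ 3 * X"] by linarith
    then have "- B * (r ^ 3 / 6) \<le> 6 / r ^ 3 * X * (r ^ 3 / 6)"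
      using r_pos by (intro mult_right_mono) auto
    also have "\<dots> = X" using r_pos by simp
    finally have X: "- B * (r ^ 3 / 6) \<le> X" .
    have gu: "- \<epsilon> \<le> G w \<bullet> u"
      using Cauchy_Schwarz_ineq2[of "G w" u] grad_small u by simp
    have qu: "lmin \<le> u \<bullet> ?L u" using quad[of u] u by simp
    have "F (w + r *\<^sub>R u) - F w = X + r * (G w \<bullet> u) + r\<^sup>2 / 2 * (u \<bullet> ?L u)"
      unfolding X_def by simp
    also have "\<dots> \<ge> - B * (r ^ 3 / 6) + r * (- \<epsilon>) + r\<^sup>2 / 2 * lmin"
      using X gu qu r_pos by (intro add_mono mult_left_mono) auto
    finally have "F (w + r *\<^sub>R u) - F w \<ge> - (r / 6) * (B * r\<^sup>2 - 3 * lmin * r + 6 * \<epsilon>)"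
      by (simp add: algebra_simps power2_eq_square power3_eq_cube)
    moreover have "- (r / 6) * (B * r\<^sup>2 - 3 * lmin * r + 6 * \<epsilon>) > 0"
      using key r_pos by (simp add: mult_pos_neg)
    ultimately show ?thesis by simp
  qed
  have sub: "cball w r \<subseteq> U" using U_ball r_lt by auto
  have contF: "continuous_on (cball w r) F"
    by (rule has_derivative_continuous_on[of _ _ "\<lambda>x h. G x \<bullet> h"])
       (use grad sub in \<open>auto intro: has_derivative_at_withinI simp: subset_iff\<close>)
  obtain w' where w': "w' \<in> cball w r" and mn: "\<And>y. y \<in> cball w r \<Longrightarrow> F w' \<le> F y"
    using continuous_attains_inf[OF compact_cball _ contF] r_pos by fastforce
  have lt: "dist w' w < r"
  proof (rule ccontr)
    assume "\<not> dist w' w < r"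
    then have d: "norm (w' - w) = r" using w' by (simp add: dist_norm norm_minus_commute)
    define u where "u = (1 / r) *\<^sub>R (w' - w)"
    have nu: "norm u = 1" unfolding u_def using d r_pos by simp
    have "w + r *\<^sub>R u = w'" unfolding u_def using r_pos by simp
    then have "F w' > F w" using sphere_gt[OF nu] by simp
    moreover have "F w' \<le> F w" using mn r_pos by simp
    ultimately show False by simp
  qed
  show ?thesis
  proof (intro exI conjI)
    show "dist w' w \<le> r" using lt by simp
    show "local_min_at F w'" unfolding local_min_at_def
      by (rule exI[of _ "ball w r"]) (use lt mn in \<open>auto simp: dist_commute\<close>)
  qed
qed

end
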